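(* Let $p$ be an odd prime and let $J$ be a finite family of lattice points in $\mathbb{Z}^2$ (repetitions allowed) with $|J|=3p-2$ or $|J|=3p-1$. Then \[ 1-(p,J)+(2p,J)\equiv 0 \pmod p. \]
   Context: For a finite family $X$ of lattice points in $\mathbb{Z}^2$ (points may repeat; subsets are subfamilies, i.e. subsets of the index set) and an integer $n\ge 0$, $(n,X)$ denotes the number of $n$-element subfamilies of $X$ whose coordinatewise sum is congruent to $(0,0)$ modulo $p$. *)

theory Defs
  imports "HOL-Number_Theory.Number_Theory"
begin

text \<open>A finite family of lattice points in Z^2 (repetitions allowed) is modelled as
  an indexing function X :: nat => int * int on the index set {..<m}.
  zero_sum_count p n X m is the number of n-element subfamilies (subsets of
  the index set) whose coordinatewise sum is congruent to (0,0) modulo p.\<close>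

definition zero_sum_count :: "nat \<Rightarrow> nat \<Rightarrow> (nat \<Rightarrow> int \<times> int) \<Rightarrow> nat \<Rightarrow> nat" where
  "zero_sum_count p n X m =
     card {S. S \<subseteq> {..<m} \<and> card S = n \<and>
              [(\<Sum>i\<in>S. fst (X i)) = 0] (mod int p) \<and>
              [(\<Sum>i\<in>S. snd (X i)) = 0] (mod int p)}"

end

theory Submission imports Defs begin

fun ev :: "(int \<times> nat set) list \<Rightarrow> nat set \<Rightarrow> int" where
  "ev [] S = 0"
| "ev ((c,T)#L) S = c * (if T \<subseteq> S then 1 else 0) + ev L S"

definition rep :: "nat \<Rightarrow> nat \<Rightarrow> (int \<times> nat set) list \<Rightarrow> bool" where
  "rep m d L \<longleftrightarrow> (\<forall>(c,T)\<in>set L. T \<subseteq> {..<m} \<and> card T \<le> d)"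

definition mul :: "(int \<times> nat set) list \<Rightarrow> (int \<times> nat set) list \<Rightarrow> (int \<times> nat set) list" where
  "mul L1 L2 = concat (map (\<lambda>(c,T). map (\<lambda>(d,U). (c*d, T \<union> U)) L2) L1)"

lemma ev_append: "ev (L1 @ L2) S = ev L1 S + ev L2 S"
  by (induction L1 S rule: ev.induct) auto

lemma ev_map: "ev (map (\<lambda>(d,U). (c*d, T \<union> U)) L2) S = (if T \<subseteq> S then c else 0) * ev L2 S"
  by (induction L2 S rule: ev.induct) (auto simp: algebra_simps)

lemma ev_mul: "ev (mul L1 L2) S = ev L1 S * ev L2 S"
  unfolding mul_def
  by (induction L1 S rule: ev.induct) (auto simp: ev_append ev_map algebra_simps)

lemma rep_mul: "rep m d1 L1 \<Longrightarrow> rep m d2 L2 \<Longrightarrow> rep m (d1+d2) (mul L1 L2)"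
  unfolding rep_def mul_def
  apply (clarsimp)
  by (smt (verit, best) add_mono card_Un_le case_prodD le_trans)

lemma rep_mono: "rep m d L \<Longrightarrow> d \<le> d' \<Longrightarrow> rep m d' L"
  unfolding rep_def by fastforce

definition smul :: "int \<Rightarrow> (int \<times> nat set) list \<Rightarrow> (int \<times> nat set) list" where
  "smul a L = map (\<lambda>(c,T). (a*c,T)) L"

lemma ev_smul: "ev (smul a L) S = a * ev L S"
  unfolding smul_def by (induction L S rule: ev.induct) (auto simp: algebra_simps)

lemma rep_smul: "rep m d L \<Longrightarrow> rep m d (smul a L)"
  unfolding rep_def smul_def by auto

lemma rep_append: "rep m d L1 \<Longrightarrow> rep m d L2 \<Longrightarrow> rep m d (L1 @ L2)"
  unfolding rep_def by auto

lemma rep_one: "rep m d [(1,{})]"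
  unfolding rep_def by auto

lemma ev_one: "ev [(1,{})] S = 1" by simp

fun pw :: "(int \<times> nat set) list \<Rightarrow> nat \<Rightarrow> (int \<times> nat set) list" where
  "pw L 0 = [(1,{})]"
| "pw L (Suc k) = mul L (pw L k)"

lemma ev_pw: "ev (pw L k) S = ev L S ^ k"
  by (induction k) (auto simp: ev_mul)

lemma rep_pw: "rep m d L \<Longrightarrow> rep m (k*d) (pw L k)"
  by (induction k) (auto simp: rep_one dest: rep_mul)

definition lin :: "(nat \<Rightarrow> int) \<Rightarrow> nat \<Rightarrow> (int \<times> nat set) list" where
  "lin a m = map (\<lambda>i. (a i, {i})) [0..<m]"

lemma ev_lin_aux: "ev (map (\<lambda>i. (a i, {i})) xs) S = (\<Sum>i\<leftarrow>xs. if i \<in> S then a i else 0)"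
  by (induction xs) auto

lemma ev_lin: "S \<subseteq> {..<m} \<Longrightarrow> ev (lin a m) S = (\<Sum>i\<in>S. a i)"
proof -
  assume S: "S \<subseteq> {..<m}"
  have "ev (lin a m) S = (\<Sum>i\<in>{..<m}. if i \<in> S then a i else 0)"
    unfolding lin_def ev_lin_aux by (simp add: sum_list_distinct_conv_sum_set atLeast0LessThan)
  also have "\<dots> = (\<Sum>i\<in>{..<m} \<inter> S. a i)" by (simp add: sum.inter_restrict)
  also have "{..<m} \<inter> S = S" using S by auto
  finally show ?thesis .
qed

lemma rep_lin: "rep m 1 (lin a m)"
  unfolding rep_def lin_def by auto

lemma alt_zero:
  assumes "T \<subseteq> {..<m}" "card T < m"
  shows "(\<Sum>S\<in>Pow {..<m}. (-1::int)^card S * (if T \<subseteq> S then 1 else 0)) = 0"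
proof -
  obtain j where j: "j < m" "j \<notin> T"
  proof (rule ccontr)
    assume "\<not> thesis"
    with that have "{..<m} \<subseteq> T" by auto
    with assms(1) have "T = {..<m}" by auto
    with assms(2) show False by simp
  qed
  define A where "A = {..<m} - {j}"
  have eq: "{..<m} = insert j A" using j A_def by auto
  have fA: "finite A" by (simp add: A_def)
  have jA: "j \<notin> A" by (simp add: A_def)
  let ?g = "\<lambda>S. (-1::int)^card S * (if T \<subseteq> S then 1 else 0)"
  have disj: "Pow A \<inter> insert j ` Pow A = {}" using jA by auto
  have inj: "inj_on (insert j) (Pow A)" unfolding inj_on_def using jA by (metis PowD insert_ident subsetD)
  have "(\<Sum>S\<in>Pow {..<m}. ?g S) = (\<Sum>S\<in>Pow A. ?g S) + (\<Sum>S\<in>insert j ` Pow A. ?g S)"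
    unfolding eq Pow_insert by (rule sum.union_disjoint) (use fA disj in auto)
  also have "(\<Sum>S\<in>insert j ` Pow A. ?g S) = (\<Sum>S\<in>Pow A. ?g (insert j S))"
    by (rule sum.reindex[OF inj, unfolded comp_def])
  also have "\<dots> = (\<Sum>S\<in>Pow A. - ?g S)"
  proof (rule sum.cong)
    fix S assume "S \<in> Pow A"
    then have "finite S" "j \<notin> S" using fA jA finite_subset by auto
    then show "?g (insert j S) = - ?g S" using j(2) by auto
  qed simp
  finally show ?thesis by (simp add: sum_negf)
qed

lemma alt_ev:
  assumes "rep m d L" "d < m"
  shows "(\<Sum>S\<in>Pow {..<m}. (-1::int)^card S * ev L S) = 0"
  using assms
proof (induction L)
  case Nil then show ?case by simp
next
  case (Cons x L)
  obtain c T where x: "x = (c,T)" by fastforce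
  note 2 = Cons[unfolded x]
  have r: "rep m d L" "T \<subseteq> {..<m}" "card T \<le> d" using 2(2) unfolding rep_def by auto
  have "(\<Sum>S\<in>Pow {..<m}. (-1::int)^card S * ev ((c,T)#L) S)
     = c * (\<Sum>S\<in>Pow {..<m}. (-1::int)^card S * (if T \<subseteq> S then 1 else 0))
       + (\<Sum>S\<in>Pow {..<m}. (-1::int)^card S * ev L S)"
    by (simp add: sum.distrib sum_distrib_left algebra_simps)
  also have "\<dots> = 0" using alt_zero[OF r(2)] r(3) 2 r(1) by simp
  finally show ?case using x by simp
qed

lemma fermat_int:
  assumes "prime p" "\<not> int p dvd a"
  shows "[a^(p-1) = 1] (mod int p)"
proof -
  define b where "b = nat (a mod int p)"
  have p0: "int p > 0" using assms(1) prime_gt_0_nat by simp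
  have ib: "int b = a mod int p" unfolding b_def using p0 by simp
  have ab: "[a = int b] (mod int p)" unfolding ib by (simp add: cong_def)
  have "\<not> p dvd b"
  proof
    assume "p dvd b"
    then have "int p dvd int b" by simp
    then show False using assms(2) ib by (simp add: dvd_mod_iff)
  qed
  then have "[b^(p-1) = 1] (mod p)" using fermat_theorem assms(1) by blast
  then have "[int b^(p-1) = 1] (mod int p)"
    by (metis cong_int_iff of_nat_1 of_nat_power)
  moreover have "[a^(p-1) = int b^(p-1)] (mod int p)" by (rule cong_pow[OF ab])
  ultimately show ?thesis using cong_trans by blast
qed

lemma ind_cong:
  assumes "prime p"
  shows "[1 - a^(p-1) = (if int p dvd a then 1 else 0)] (mod int p)"
proof (cases "int p dvd a")
  case True
  have "p - 1 > 0" using assms prime_gt_1_nat by simp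
  then have "int p dvd a^(p-1)" using True by (metis dvd_power dvd_trans)
  then have "[a^(p-1) = 0] (mod int p)" by (simp add: cong_0_iff)
  then have "[1 - a^(p-1) = 1 - 0] (mod int p)" by (intro cong_diff) auto
  then show ?thesis using True by simp
next
  case False
  then have "[1 - a^(p-1) = 1 - 1] (mod int p)" using fermat_int[OF assms False] by (intro cong_diff) auto
  then show ?thesis using False by simp
qed

definition om :: "(int \<times> nat set) list \<Rightarrow> (int \<times> nat set) list" where
  "om X = [(1,{})] @ smul (-1) X"

lemma ev_om: "ev (om X) S = 1 - ev X S"
  unfolding om_def by (simp add: ev_append ev_smul)

lemma rep_om: "rep m d X \<Longrightarrow> rep m d (om X)"
  unfolding om_def by (intro rep_append rep_one rep_smul)

theorem corollary2:
  fixes p m :: nat and J :: "nat \<Rightarrow> int \<times> int"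
  assumes "prime p" and "odd p"
    and "m = 3 * p - 2 \<or> m = 3 * p - 1"
  shows "[1 - int (zero_sum_count p p J m) + int (zero_sum_count p (2 * p) J m) = 0] (mod int p)"
proof -
  have p2: "p \<ge> 2" using assms(1) prime_ge_2_nat by blast
  have p3: "p \<ge> 3" using p2 assms(2) by (cases "p = 2") auto
  have mge: "m \<ge> 3*p - 2" "m \<le> 3*p - 1" using assms(3) by auto
  define A where "A S = (\<Sum>i\<in>S. fst (J i))" for S
  define B where "B S = (\<Sum>i\<in>S. snd (J i))" for S
  define C where "C S = int (card S)" for S :: "nat set"
  define L where "L = mul (om (pw (lin (\<lambda>i. fst (J i)) m) (p-1)))
     (mul (om (pw (lin (\<lambda>i. snd (J i)) m) (p-1))) (om (pw (lin (\<lambda>i. 1) m) (p-1))))"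
  define phi where "phi S = (1 - A S^(p-1)) * (1 - B S^(p-1)) * (1 - C S^(p-1))" for S
  have repL: "rep m ((p-1)*1 + ((p-1)*1 + (p-1)*1)) L"
    unfolding L_def by (intro rep_mul rep_om rep_pw rep_lin)
  have dlt: "(p-1)*1 + ((p-1)*1 + (p-1)*1) < m" using mge p3 by simp
  have evL: "ev L S = phi S" if "S \<subseteq> {..<m}" for S
    using that unfolding L_def phi_def A_def B_def C_def
    by (simp add: ev_mul ev_om ev_pw ev_lin)
  have s0: "(\<Sum>S\<in>Pow {..<m}. (-1::int)^card S * phi S) = 0"
  proof -
    have "(\<Sum>S\<in>Pow {..<m}. (-1::int)^card S * phi S) = (\<Sum>S\<in>Pow {..<m}. (-1::int)^card S * ev L S)"
      by (rule sum.cong) (auto simp: evL)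
    then show ?thesis using alt_ev[OF repL dlt] by simp
  qed
  define Z where "Z S \<longleftrightarrow> int p dvd A S \<and> int p dvd B S \<and> p dvd card S" for S
  have pc0: "[phi S = (if int p dvd A S then 1 else 0) * (if int p dvd B S then 1 else 0) *
                (if int p dvd C S then 1 else 0)] (mod int p)" for S
    unfolding phi_def by (intro cong_mult ind_cong assms(1))
  have pc: "[phi S = (if Z S then 1 else 0)] (mod int p)" for S
  proof -
    have "(if int p dvd A S then 1 else 0) * (if int p dvd B S then 1 else 0) *
                (if int p dvd C S then 1 else 0) = (if Z S then 1 else (0::int))"
      unfolding Z_def C_def by (simp add: int_dvd_int_iff)
    then show ?thesis using pc0[of S] by metis
  qed
  have "[(\<Sum>S\<in>Pow {..<m}. (-1::int)^card S * phi S) =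
         (\<Sum>S\<in>Pow {..<m}. (-1::int)^card S * (if Z S then 1 else 0))] (mod int p)"
    by (intro cong_sum cong_mult cong_refl pc)
  then have c1: "[(\<Sum>S\<in>Pow {..<m}. (-1::int)^card S * (if Z S then 1 else 0)) = 0] (mod int p)"
    using s0 by (simp add: cong_sym_eq)
  have sz: "(\<Sum>S\<in>Pow {..<m}. (-1::int)^card S * (if Z S then 1 else 0))
      = (\<Sum>S\<in>{S\<in>Pow {..<m}. Z S}. (-1::int)^card S)"
  proof -
    have "(\<Sum>S\<in>Pow {..<m}. (-1::int)^card S * (if Z S then 1 else 0))
      = (\<Sum>S\<in>Pow {..<m}. if Z S then (-1::int)^card S else 0)"
      by (rule sum.cong) auto
    also have "\<dots> = (\<Sum>S\<in>{S\<in>Pow {..<m}. Z S}. (-1::int)^card S)"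
      by (rule sum.inter_filter[symmetric]) simp
    finally show ?thesis .
  qed
  define Zn where "Zn n = {S. S \<subseteq> {..<m} \<and> card S = n \<and>
              [(\<Sum>i\<in>S. fst (J i)) = 0] (mod int p) \<and>
              [(\<Sum>i\<in>S. snd (J i)) = 0] (mod int p)}" for n
  have Zeq: "{S\<in>Pow {..<m}. Z S} = Zn 0 \<union> (Zn p \<union> Zn (2*p))"
  proof (rule equalityI; rule subsetI)
    fix S assume "S \<in> {S\<in>Pow {..<m}. Z S}"
    then have S: "S \<subseteq> {..<m}" "Z S" by auto
    then have "card S \<le> m" by (metis card_lessThan card_mono finite_lessThan)
    then have cS: "card S < 3 * p" using mge p2 by linarith
    obtain k where k: "card S = p * k" using S(2) Z_def by blast
    then have "k < 3" using cS by simp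
    then have "card S = 0 \<or> card S = p \<or> card S = 2*p" using k
      by (auto simp: less_Suc_eq numeral_3_eq_3)
    then show "S \<in> Zn 0 \<union> (Zn p \<union> Zn (2*p))"
      using S unfolding Zn_def Z_def A_def B_def by (auto simp: cong_0_iff)
  next
    fix S assume "S \<in> Zn 0 \<union> (Zn p \<union> Zn (2*p))"
    then show "S \<in> {S\<in>Pow {..<m}. Z S}"
      unfolding Zn_def Z_def A_def B_def by (auto simp: cong_0_iff)
  qed
  have fin: "finite (Zn n)" for n
    unfolding Zn_def by (rule finite_subset[of _ "Pow {..<m}"]) auto
  have Z0: "Zn 0 = {{}}"
  proof -
    have "S \<in> Zn 0 \<longleftrightarrow> S = {}" for S
      unfolding Zn_def using finite_subset[of S "{..<m}"] by (auto)
    then show ?thesis by auto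
  qed
  have sn: "(\<Sum>S\<in>Zn n. (-1::int)^card S) = (-1)^n * int (card (Zn n))" for n
  proof -
    have "(\<Sum>S\<in>Zn n. (-1::int)^card S) = (\<Sum>S\<in>Zn n. (-1)^n)"
      by (rule sum.cong) (auto simp: Zn_def)
    then show ?thesis by simp
  qed
  have d1: "Zn p \<inter> Zn (2*p) = {}" using p2 unfolding Zn_def by auto
  have d2: "Zn 0 \<inter> (Zn p \<union> Zn (2*p)) = {}" using p2 unfolding Zn_def by auto
  have "(\<Sum>S\<in>{S\<in>Pow {..<m}. Z S}. (-1::int)^card S)
     = (\<Sum>S\<in>Zn 0. (-1::int)^card S) + ((\<Sum>S\<in>Zn p. (-1::int)^card S) + (\<Sum>S\<in>Zn (2*p). (-1::int)^card S))"
    unfolding Zeq by (simp add: sum.union_disjoint fin d1 d2)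
  also have "\<dots> = 1 - int (card (Zn p)) + int (card (Zn (2*p)))"
    unfolding sn using assms(2) Z0 by (simp add: power_mult)
  finally have fin2: "(\<Sum>S\<in>{S\<in>Pow {..<m}. Z S}. (-1::int)^card S) = 1 - int (card (Zn p)) + int (card (Zn (2*p)))" .
  have cz: "card (Zn n) = zero_sum_count p n J m" for n
    unfolding Zn_def zero_sum_count_def by simp
  show ?thesis using c1 sz fin2 by (simp add: cz)
qed

end
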